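(* Let $U_1$ be a vector space concentrated in degree $1$ (hence odd), set $U_0=\mathrm{End}(U_1)$ and recursively $U_{-p+1}=\mathrm{Hom}(U_1,U_{-p+2})$ for $p\ge 2$, and $U_{1-}=\bigoplus_{k\le1}U_k$. Define brackets $U_i\otimes U_j\to U_{i+j}$ for $i+j\le 1$ recursively by $[x,u]=x(u)$, $[u,x]=-(-1)^{|x|}x(u)$, and $[x,y](u)=[x,y(u)]+(-1)^{|y|}[x(u),y]$ for $x,y\in U_{0-}=\bigoplus_{k\le0}U_k$ and $u\in U_1$. Then $U_{1-}$ with this bracket is a semilocal Lie superalgebra (in particular $U_0=\mathfrak{gl}(U_1)$ as a Lie algebra).
   Context: All vector spaces are over $\mathbb{K}=\mathbb{R}$ or $\mathbb{C}$, $\mathbb{Z}$-graded, with parity equal to degree mod 2; $|x|$ is the degree. A semilocal Lie superalgebra is a graded space concentrated in degrees $\le 1$ with bilinear brackets $A_i\otimes A_j\to A_{i+j}$ defined whenever $i+j\le1$, satisfying $[x,y]=-(-1)^{|x||y|}[y,x]$ and $[x,[y,z]]-(-1)^{|x||y|}[y,[x,z]]=[[x,y],z]$ whenever all brackets involved are defined. *)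

theory Defs
  imports Complex_Main "HOL-Library.Function_Algebras"
begin

text \<open>A homogeneous element of U_k (k \<le> 1) is represented as a function on
argument lists: an element of U_1 is a vector v, represented by the function that
is v on the empty list and 0 elsewhere; an element x of U_k with k \<le> 0 is
represented by the function (u # us) \<mapsto> (x(u))(us), and [] \<mapsto> 0.
Thus x(u) = app x u.\<close>

type_synonym 'v mlin = "'v list \<Rightarrow> 'v"

definition vec_elt :: "'v::zero \<Rightarrow> 'v mlin" where
  "vec_elt v = (\<lambda>xs. if xs = [] then v else 0)"

definition app :: "'v mlin \<Rightarrow> 'v \<Rightarrow> 'v mlin" where
  "app x u = (\<lambda>xs. x (u # xs))"

text \<open>Uar scale m is U_{1-m}: Uar 0 = U_1, Uar (Suc m) = Hom(U_1, Uar m)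
(linear maps, via currying).\<close>
fun Uar :: "('k::field \<Rightarrow> 'v::ab_group_add \<Rightarrow> 'v) \<Rightarrow> nat \<Rightarrow> 'v mlin set" where
  "Uar scale 0 = range vec_elt"
| "Uar scale (Suc m) =
     {x. x [] = 0 \<and> (\<forall>u. app x u \<in> Uar scale m) \<and>
         (\<forall>a b u w. app x (scale a u + scale b w) =
                     (\<lambda>xs. scale a (app x u xs) + scale b (app x w xs)))}"

definition U :: "('k::field \<Rightarrow> 'v::ab_group_add \<Rightarrow> 'v) \<Rightarrow> int \<Rightarrow> 'v mlin set" where
  "U scale k = (if k \<le> 1 then Uar scale (nat (1 - k)) else {0})"

definition deg :: "nat \<Rightarrow> int" where "deg m = 1 - int m"

definition sgnv :: "int \<Rightarrow> 'a::ab_group_add \<Rightarrow> 'a" where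
  "sgnv k v = (if even k then v else - v)"

text \<open>The recursively defined bracket, indexed by numbers of arguments
(i.e. degrees 1 - m and 1 - n):
  [x,u] = x(u), [u,x] = -(-1)^|x| x(u),
  [x,y](u) = [x,y(u)] + (-1)^|y| [x(u),y].\<close>
fun brk :: "nat \<Rightarrow> nat \<Rightarrow> 'v::ab_group_add mlin \<Rightarrow> 'v mlin \<Rightarrow> 'v mlin" where
  "brk 0 0 x y = 0"
| "brk (Suc m) 0 x y = app x (y [])"
| "brk 0 (Suc n) x y = - sgnv (deg (Suc n)) (app y (x []))"
| "brk (Suc m) (Suc n) x y =
     (\<lambda>xs. case xs of [] \<Rightarrow> 0
        | u # us \<Rightarrow> (brk (Suc m) n x (app y u)
                    + sgnv (deg (Suc n)) (brk m (Suc n) (app x u) y)) us)"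

definition br :: "int \<Rightarrow> int \<Rightarrow> 'v::ab_group_add mlin \<Rightarrow> 'v mlin \<Rightarrow> 'v mlin" where
  "br i j x y = brk (nat (1 - i)) (nat (1 - j)) x y"

text \<open>Parity = degree mod 2.\<close>
definition semilocal_lie_superalgebra ::
  "('k::field \<Rightarrow> 'a::ab_group_add \<Rightarrow> 'a) \<Rightarrow> (int \<Rightarrow> 'a set) \<Rightarrow> (int \<Rightarrow> int \<Rightarrow> 'a \<Rightarrow> 'a \<Rightarrow> 'a) \<Rightarrow> bool"
where
  "semilocal_lie_superalgebra smult A b \<longleftrightarrow>
     vector_space smult \<and>
     (\<forall>k\<le>1. 0 \<in> A k \<and> (\<forall>x\<in>A k. \<forall>y\<in>A k. x + y \<in> A k) \<and> (\<forall>c. \<forall>x\<in>A k. smult c x \<in> A k)) \<and>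
     (\<forall>i j. i \<le> 1 \<and> j \<le> 1 \<and> i + j \<le> 1 \<longrightarrow>
        (\<forall>x\<in>A i. \<forall>y\<in>A j. b i j x y \<in> A (i + j)) \<and>
        (\<forall>x\<in>A i. \<forall>x'\<in>A i. \<forall>y\<in>A j. b i j (x + x') y = b i j x y + b i j x' y) \<and>
        (\<forall>x\<in>A i. \<forall>y\<in>A j. \<forall>y'\<in>A j. b i j x (y + y') = b i j x y + b i j x y') \<and>
        (\<forall>c. \<forall>x\<in>A i. \<forall>y\<in>A j. b i j (smult c x) y = smult c (b i j x y)) \<and>
        (\<forall>c. \<forall>x\<in>A i. \<forall>y\<in>A j. b i j x (smult c y) = smult c (b i j x y)) \<and>
        (\<forall>x\<in>A i. \<forall>y\<in>A j. b i j x y = - sgnv (i * j) (b j i y x))) \<and>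
     (\<forall>i j k. i \<le> 1 \<and> j \<le> 1 \<and> k \<le> 1 \<and> i + j \<le> 1 \<and> j + k \<le> 1 \<and> i + k \<le> 1
              \<and> i + j + k \<le> 1 \<longrightarrow>
        (\<forall>x\<in>A i. \<forall>y\<in>A j. \<forall>z\<in>A k.
           b i (j + k) x (b j k y z) - sgnv (i * j) (b j (i + k) y (b i k x z))
             = b (i + j) k (b i j x y) z))"

end

theory Submission imports Defs begin

declare brk.simps(4)[simp del]

lemma sgnv_simps[simp]:
  "sgnv k (a + b) = sgnv k a + sgnv k b"
  "sgnv k (- a) = - sgnv k a"
  "sgnv k (sgnv k a) = a"
  "sgnv k 0 = 0"
  by (auto simp: sgnv_def)

lemma sgnv_fun[simp]: "(sgnv k f) xs = sgnv k (f xs)"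
  by (simp add: sgnv_def)

lemma app_simps[simp]:
  "app (f + g) u = app f u + app g u"
  "app (- f) u = - app f u"
  "app 0 u = 0"
  "app (sgnv k f) u = sgnv k (app f u)"
  by (auto simp: app_def sgnv_def fun_eq_iff)

lemma app_diff[simp]: "app (f - g) u = app f u - app g u"
  by (auto simp: app_def fun_eq_iff)

lemma app_apply: "app f u xs = f (u # xs)" by (simp add: app_def)

lemma mlin_ext:
  assumes "f [] = g []" "\<And>u. app f u = app g u"
  shows "f = g"
proof
  fix xs show "f xs = g xs"
    using assms by (cases xs) (auto simp: app_def fun_eq_iff)
qed

lemma app_brk:
  "app (brk (Suc m) (Suc n) x y) u =
     brk (Suc m) n x (app y u) + sgnv (deg (Suc n)) (brk m (Suc n) (app x u) y)"
  by (simp add: app_def brk.simps(4) fun_eq_iff)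

lemma brk_Nil: "brk (Suc m) (Suc n) x y [] = 0"
  by (simp add: brk.simps(4))

lemma antisym_nat:
  "brk m n x y = - sgnv ((1 - int m) * (1 - int n)) (brk n m y x)"
proof (induction "m+n" arbitrary: m n x y rule: less_induct)
  case less
  show ?case
  proof (cases m)
    case 0
    then show ?thesis
      by (cases n) (auto simp: sgnv_def deg_def)
  next
    case (Suc m')
    show ?thesis
    proof (cases n)
      case 0
      then show ?thesis using Suc by (auto simp: sgnv_def deg_def)
    next
      case (Suc n')
      have "brk (Suc m') (Suc n') x y = - sgnv ((1 - int (Suc m')) * (1 - int (Suc n'))) (brk (Suc n') (Suc m') y x)"
      proof (rule mlin_ext)
        show "brk (Suc m') (Suc n') x y [] = (- sgnv ((1 - int (Suc m')) * (1 - int (Suc n'))) (brk (Suc n') (Suc m') y x)) []"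
          by (simp add: brk_Nil)
      next
        fix u
        have e1: "brk (Suc m') n' x (app y u) = - sgnv ((1 - int (Suc m')) * (1 - int n')) (brk n' (Suc m') (app y u) x)"
          using less(1)[of "Suc m'" n' x "app y u"] Suc \<open>m = Suc m'\<close> by simp
        have e2: "brk m' (Suc n') (app x u) y = - sgnv ((1 - int m') * (1 - int (Suc n'))) (brk (Suc n') m' y (app x u))"
          using less(1)[of m' "Suc n'" "app x u" y] Suc \<open>m = Suc m'\<close> by simp
        show "app (brk (Suc m') (Suc n') x y) u = app (- sgnv ((1 - int (Suc m')) * (1 - int (Suc n'))) (brk (Suc n') (Suc m') y x)) u"
          unfolding app_brk app_simps e1 e2
          by (cases "even m'"; cases "even n'") (auto simp: sgnv_def deg_def algebra_simps)
      qed
      then show ?thesis using Suc \<open>m = Suc m'\<close> by simp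
    qed
  qed
qed


definition smul :: "('k \<Rightarrow> 'v \<Rightarrow> 'v) \<Rightarrow> 'k \<Rightarrow> 'v mlin \<Rightarrow> 'v mlin" where
  "smul sc c f = (\<lambda>xs. sc c (f xs))"

lemma vec_elt_simps:
  "vec_elt (0::'v::ab_group_add) = 0"
  "vec_elt (u + w) = vec_elt u + vec_elt (w::'v::ab_group_add)"
  "vec_elt u [] = u"
  by (auto simp: vec_elt_def fun_eq_iff)

context vector_space
begin

lemma smul_apply[simp]: "smul scale c f xs = scale c (f xs)"
  by (simp add: smul_def)

lemma smul_simps[simp]:
  "smul scale c (f + g) = smul scale c f + smul scale c g"
  "smul scale c (- f) = - smul scale c f"
  "smul scale c 0 = 0"
  "smul scale c (sgnv k f) = sgnv k (smul scale c f)"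
  "app (smul scale c f) u = smul scale c (app f u)"
  "smul scale (-1) f = - f"
  by (auto simp: smul_def sgnv_def app_def fun_eq_iff scale_right_distrib)

lemma lin_gen: "x \<in> Uar scale (Suc n) \<Longrightarrow>
   app x (scale a u + scale b w) = (\<lambda>xs. scale a (app x u xs) + scale b (app x w xs))"
  by (simp only: Uar.simps mem_Collect_eq)

lemma lin_add: "x \<in> Uar scale (Suc n) \<Longrightarrow> app x (u + w) = app x u + app x w"
  using lin_gen[of x n 1 u 1 w] by (simp add: fun_eq_iff)

lemma lin_smul: "x \<in> Uar scale (Suc n) \<Longrightarrow> app x (scale c u) = smul scale c (app x u)"
  using lin_gen[of x n c u 0 u] by (simp add: fun_eq_iff)

lemma S_closed:
  "0 \<in> Uar scale m \<and> (\<forall>x\<in>Uar scale m. \<forall>y\<in>Uar scale m. x + y \<in> Uar scale m)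
   \<and> (\<forall>c. \<forall>x\<in>Uar scale m. smul scale c x \<in> Uar scale m)"
proof (induction m)
  case 0
  have 1: "smul scale c (vec_elt u) = vec_elt (scale c u)" for c u
    by (auto simp: vec_elt_def fun_eq_iff)
  have 2: "vec_elt u + vec_elt w = vec_elt (u + w)" for u w :: 'b
    by (auto simp: vec_elt_def fun_eq_iff)
  have 3: "(0::'b mlin) = vec_elt 0"
    by (auto simp: vec_elt_def fun_eq_iff)
  have "x + y \<in> range vec_elt" if "x \<in> range vec_elt" "y \<in> range vec_elt" for x y :: "'b mlin"
    using that 2 by auto
  moreover have "smul scale c x \<in> range vec_elt" if "x \<in> range vec_elt" for c and x :: "'b mlin"
    using that 1 by auto
  moreover have "(0::'b mlin) \<in> range vec_elt" using 3 by auto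
  ultimately show ?case unfolding Uar.simps by blast
next
  case (Suc m)
  have A: "0 \<in> Uar scale (Suc m)"
    using Suc unfolding Uar.simps mem_Collect_eq by (simp add: app_def zero_fun_def)
  have B: "x + y \<in> Uar scale (Suc m)" if "x \<in> Uar scale (Suc m)" "y \<in> Uar scale (Suc m)" for x y
  proof -
    have "(x + y) [] = 0" using that by simp
    moreover have "app (x + y) u \<in> Uar scale m" for u
    proof -
      have "app x u \<in> Uar scale m" "app y u \<in> Uar scale m" using that by (simp_all only: Uar.simps mem_Collect_eq)
      then show ?thesis using Suc.IH unfolding app_simps(1) by blast
    qed
    moreover have "app (x + y) (scale a u + scale b w) = (\<lambda>xs. scale a (app (x + y) u xs) + scale b (app (x + y) w xs))" for a b u w
      using lin_gen[OF that(1), of a u b w] lin_gen[OF that(2), of a u b w]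
      by (simp add: fun_eq_iff scale_right_distrib algebra_simps)
    ultimately show ?thesis unfolding Uar.simps mem_Collect_eq by blast
  qed
  have C: "smul scale c x \<in> Uar scale (Suc m)" if "x \<in> Uar scale (Suc m)" for c x
  proof -
    have "(smul scale c x) [] = 0" using that by simp
    moreover have "app (smul scale c x) u \<in> Uar scale m" for u
    proof -
      have "app x u \<in> Uar scale m" using that by (simp_all only: Uar.simps mem_Collect_eq)
      then show ?thesis using Suc.IH unfolding smul_simps(5) by blast
    qed
    moreover have "app (smul scale c x) (scale a u + scale b w) = (\<lambda>xs. scale a (app (smul scale c x) u xs) + scale b (app (smul scale c x) w xs))" for a b u w
      using lin_gen[OF that(1), of a u b w]
      by (simp add: fun_eq_iff app_apply scale_right_distrib del: smul_simps scale_scale)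
        (simp add: mult.commute)
    ultimately show ?thesis unfolding Uar.simps mem_Collect_eq by blast
  qed
  show ?case using A B C by blast
qed

lemma S_zero: "0 \<in> Uar scale m" using S_closed by blast
lemma S_add: "x \<in> Uar scale m \<Longrightarrow> y \<in> Uar scale m \<Longrightarrow> x + y \<in> Uar scale m" using S_closed by blast
lemma S_smul: "x \<in> Uar scale m \<Longrightarrow> smul scale c x \<in> Uar scale m" using S_closed by blast
lemma S_neg: "x \<in> Uar scale m \<Longrightarrow> - x \<in> Uar scale m"
  using S_smul[of x m "-1"] unfolding smul_simps .
lemma S_sgnv: "x \<in> Uar scale m \<Longrightarrow> sgnv k x \<in> Uar scale m"
  unfolding sgnv_def using S_neg by auto
lemma S_app: "x \<in> Uar scale (Suc m) \<Longrightarrow> app x u \<in> Uar scale m" unfolding Uar.simps by blast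
lemma S_Nil: "x \<in> Uar scale (Suc m) \<Longrightarrow> x [] = 0" unfolding Uar.simps by blast

lemma brk_add1:
  "y \<in> Uar scale n \<Longrightarrow> brk m n (x + x') y = brk m n x y + brk m n x' y"
proof (induction "m+n" arbitrary: m n x x' y rule: less_induct)
  case less
  show ?case
  proof (cases m)
    case 0
    show ?thesis
    proof (cases n)
      case 0 then show ?thesis using \<open>m = 0\<close> by simp
    next
      case (Suc n')
      have yS: "y \<in> Uar scale (Suc n')" using less.prems unfolding Suc .
      have "brk 0 (Suc n') (x + x') y = brk 0 (Suc n') x y + brk 0 (Suc n') x' y"
        by (simp only: brk.simps(3) plus_fun_apply lin_add[OF yS] app_simps sgnv_simps minus_add_distrib)
      then show ?thesis unfolding Suc \<open>m = 0\<close> .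
    qed
  next
    case (Suc m')
    show ?thesis
    proof (cases n)
      case 0 then show ?thesis using Suc by simp
    next
      case (Suc n')
      have yS: "y \<in> Uar scale (Suc n')" using less.prems unfolding Suc .
      show ?thesis unfolding Suc \<open>m = Suc m'\<close>
      proof (rule mlin_ext)
        fix u
        have e1: "brk (Suc m') n' (x + x') (app y u) = brk (Suc m') n' x (app y u) + brk (Suc m') n' x' (app y u)"
          by (rule less(1)[of "Suc m'" n' "app y u" x x']) (simp add: Suc \<open>m = Suc m'\<close>, rule S_app[OF yS])
        have e2: "brk m' (Suc n') (app x u + app x' u) y = brk m' (Suc n') (app x u) y + brk m' (Suc n') (app x' u) y"
          by (rule less(1)[of m' "Suc n'" y "app x u" "app x' u"]) (simp add: Suc \<open>m = Suc m'\<close>, rule yS)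
        show "app (brk (Suc m') (Suc n') (x + x') y) u = app (brk (Suc m') (Suc n') x y + brk (Suc m') (Suc n') x' y) u"
          unfolding app_brk app_simps e1 e2 by (simp add: algebra_simps)
      qed (simp add: brk_Nil)
    qed
  qed
qed

lemma brk_smul1:
  "y \<in> Uar scale n \<Longrightarrow> brk m n (smul scale c x) y = smul scale c (brk m n x y)"
proof (induction "m+n" arbitrary: m n x y rule: less_induct)
  case less
  show ?case
  proof (cases m)
    case 0
    show ?thesis
    proof (cases n)
      case 0 then show ?thesis using \<open>m = 0\<close> by simp
    next
      case (Suc n')
      have yS: "y \<in> Uar scale (Suc n')" using less.prems unfolding Suc .
      have "brk 0 (Suc n') (smul scale c x) y = smul scale c (brk 0 (Suc n') x y)"
        by (simp only: brk.simps(3) smul_apply lin_smul[OF yS] smul_simps)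
      then show ?thesis unfolding Suc \<open>m = 0\<close> .
    qed
  next
    case (Suc m')
    show ?thesis
    proof (cases n)
      case 0 then show ?thesis using Suc by simp
    next
      case (Suc n')
      have yS: "y \<in> Uar scale (Suc n')" using less.prems unfolding Suc .
      show ?thesis unfolding Suc \<open>m = Suc m'\<close>
      proof (rule mlin_ext)
        fix u
        have e1: "brk (Suc m') n' (smul scale c x) (app y u) = smul scale c (brk (Suc m') n' x (app y u))"
          by (rule less(1)[of "Suc m'" n' "app y u" x]) (simp add: Suc \<open>m = Suc m'\<close>, rule S_app[OF yS])
        have e2: "brk m' (Suc n') (smul scale c (app x u)) y = smul scale c (brk m' (Suc n') (app x u) y)"
          by (rule less(1)[of m' "Suc n'" y "app x u"]) (simp add: Suc \<open>m = Suc m'\<close>, rule yS)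
        show "app (brk (Suc m') (Suc n') (smul scale c x) y) u = app (smul scale c (brk (Suc m') (Suc n') x y)) u"
          unfolding app_brk app_simps smul_simps e1 e2 by simp
      qed (simp add: brk_Nil)
    qed
  qed
qed

lemma sg_comm: "sgnv ((1 - int n) * (1 - int m)) v = sgnv ((1 - int m) * (1 - int n)) v"
  by (simp add: mult.commute)

lemma brk_add2:
  "x \<in> Uar scale m \<Longrightarrow> brk m n x (y + y') = brk m n x y + brk m n x y'"
  using antisym_nat[of m n x "y+y'"] antisym_nat[of m n x y] antisym_nat[of m n x y']
    brk_add1[of x m n y y'] by simp

lemma brk_smul2:
  "x \<in> Uar scale m \<Longrightarrow> brk m n x (smul scale c y) = smul scale c (brk m n x y)"
  using antisym_nat[of m n x "smul scale c y"] antisym_nat[of m n x y]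
    brk_smul1[of x m n c y] by simp

lemma brk_neg1: "y \<in> Uar scale n \<Longrightarrow> brk m n (- x) y = - brk m n x y"
  using brk_smul1[of y n m "-1" x] by simp
lemma brk_neg2: "x \<in> Uar scale m \<Longrightarrow> brk m n x (- y) = - brk m n x y"
  using brk_smul2[of x m n "-1" y] by simp
lemma brk_sg1: "y \<in> Uar scale n \<Longrightarrow> brk m n (sgnv k x) y = sgnv k (brk m n x y)"
  by (simp add: sgnv_def brk_neg1)
lemma brk_sg2: "x \<in> Uar scale m \<Longrightarrow> brk m n x (sgnv k y) = sgnv k (brk m n x y)"
  by (simp add: sgnv_def brk_neg2)

lemma lin_gen': "x \<in> Uar scale (Suc n) \<Longrightarrow>
   app x (scale a u + scale b w) = smul scale a (app x u) + smul scale b (app x w)"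
  by (simp only: lin_add lin_smul)

lemma brk_closed:
  "x \<in> Uar scale m \<Longrightarrow> y \<in> Uar scale n \<Longrightarrow> 1 \<le> m + n \<Longrightarrow> brk m n x y \<in> Uar scale (m + n - 1)"
proof (induction "m+n" arbitrary: m n x y rule: less_induct)
  case less
  show ?case
  proof (cases m)
    case 0
    show ?thesis
    proof (cases n)
      case 0 then show ?thesis using \<open>m = 0\<close> less.prems by simp
    next
      case (Suc n')
      have yS: "y \<in> Uar scale (Suc n')" using less.prems unfolding Suc by simp
      have "brk 0 (Suc n') x y \<in> Uar scale n'"
        unfolding brk.simps by (rule S_neg, rule S_sgnv, rule S_app[OF yS])
      then show ?thesis unfolding Suc \<open>m = 0\<close> by simp
    qed
  next
    case (Suc m')
    have xS: "x \<in> Uar scale (Suc m')" using less.prems unfolding Suc by simp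
    show ?thesis
    proof (cases n)
      case 0
      have "brk (Suc m') 0 x y \<in> Uar scale m'"
        unfolding brk.simps by (rule S_app[OF xS])
      then show ?thesis unfolding Suc \<open>n = 0\<close> by simp
    next
      case (Suc n')
      have yS: "y \<in> Uar scale (Suc n')" using less.prems unfolding Suc by simp
      have I1: "brk (Suc m') n' x (app y u) \<in> Uar scale (m' + n')" for u
        using less(1)[of "Suc m'" n' x "app y u"] xS S_app[OF yS] Suc \<open>m = Suc m'\<close> by simp
      have I2: "brk m' (Suc n') (app x u) y \<in> Uar scale (m' + n')" for u
        using less(1)[of m' "Suc n'" "app x u" y] yS S_app[OF xS] Suc \<open>m = Suc m'\<close> by simp
      let ?B = "brk (Suc m') (Suc n') x y"
      have "?B \<in> Uar scale (Suc (m' + n'))"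
        unfolding Uar.simps mem_Collect_eq
      proof (intro conjI allI)
        show "?B [] = 0" by (rule brk_Nil)
      next
        fix u show "app ?B u \<in> Uar scale (m' + n')"
          unfolding app_brk by (rule S_add[OF I1 S_sgnv[OF I2]])
      next
        fix a b u w
        show "app ?B (scale a u + scale b w) = (\<lambda>xs. scale a (app ?B u xs) + scale b (app ?B w xs))"
          unfolding app_brk lin_gen'[OF xS] lin_gen'[OF yS] brk_add1[OF yS] brk_add2[OF xS]
            brk_smul1[OF yS] brk_smul2[OF xS]
          by (simp add: fun_eq_iff sgnv_def scale_right_distrib algebra_simps)
      qed
      then show ?thesis unfolding Suc \<open>m = Suc m'\<close> by simp
    qed
  qed
qed

lemma S0_elt: "z \<in> Uar scale 0 \<Longrightarrow> z = vec_elt (z [])"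
  by (auto simp: vec_elt_def)

lemma jacobi_nat:
  "x \<in> Uar scale a \<Longrightarrow> y \<in> Uar scale b \<Longrightarrow> z \<in> Uar scale c \<Longrightarrow>
   1 \<le> a + b \<Longrightarrow> 1 \<le> b + c \<Longrightarrow> 1 \<le> a + c \<Longrightarrow> 2 \<le> a + b + c \<Longrightarrow>
   brk a (b + c - 1) x (brk b c y z) - sgnv ((1 - int a) * (1 - int b)) (brk b (a + c - 1) y (brk a c x z))
     = brk (a + b - 1) c (brk a b x y) z"
proof (induction "a+b+c" arbitrary: a b c x y z rule: less_induct)
  case less
  show ?case
  proof (cases "c = 0")
    case True
    obtain a' where a: "a = Suc a'" using less.prems True by (cases a) auto
    obtain b' where b: "b = Suc b'" using less.prems True by (cases b) auto
    have zz: "z = vec_elt (z [])" using less.prems(3) True S0_elt by simp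
    define w where "w = z []"
    have zw: "z = vec_elt w" using zz w_def by simp
    have as: "brk (Suc b') a' y (app x w) = - sgnv ((1 - int (Suc b')) * (1 - int a')) (brk a' (Suc b') (app x w) y)"
      by (rule antisym_nat)
    show ?thesis
      unfolding a b True zw
      using as
      by (cases "even a'"; cases "even b'") (simp_all add: app_brk vec_elt_simps sgnv_def deg_def)
  next
    case False
    then obtain c' where c: "c = Suc c'" by (cases c) auto
    have zS: "z \<in> Uar scale (Suc c')" using less.prems unfolding c by simp
    show ?thesis
    proof (cases "a = 0")
      case True
      obtain b' where b: "b = Suc b'" using less.prems True by (cases b) auto
      have yS: "y \<in> Uar scale (Suc b')" using less.prems unfolding b by simp
      define v where "v = x []"
      have xv: "x = vec_elt v" using less.prems(1) True S0_elt v_def by simp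
      show ?thesis
        unfolding True b c xv
        by (cases "even b'"; cases "even c'")
          (simp_all add: app_brk vec_elt_simps sgnv_def deg_def brk_neg1[OF zS] brk_neg2[OF yS]
             brk_add2[OF yS] brk_add1[OF zS])
    next
      case aF: False
      then obtain a' where a: "a = Suc a'" by (cases a) auto
      have xS: "x \<in> Uar scale (Suc a')" using less.prems unfolding a by simp
      show ?thesis
      proof (cases "b = 0")
        case True
        define v where "v = y []"
        have yv: "y = vec_elt v" using less.prems(2) True S0_elt v_def by simp
        show ?thesis
          unfolding True a c yv
          by (cases "even a'"; cases "even c'")
            (simp_all add: app_brk vec_elt_simps sgnv_def deg_def brk_neg2[OF xS] brk_add2[OF xS])
      next
        case False
        then obtain b' where b: "b = Suc b'" by (cases b) auto
        have yS: "y \<in> Uar scale (Suc b')" using less.prems unfolding b by simp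
        have lt: "Suc a' + Suc b' + c' < a + b + c" "Suc a' + b' + Suc c' < a + b + c" "a' + Suc b' + Suc c' < a + b + c"
          using a b c by simp_all
        have i1: "Suc b' + Suc c' - 1 = Suc (b' + c')" "Suc a' + Suc c' - 1 = Suc (a' + c')"
          "Suc a' + Suc b' - 1 = Suc (a' + b')" by simp_all
        show ?thesis unfolding a b c i1
        proof (rule mlin_ext)
          fix u
          have zu: "app z u \<in> Uar scale c'" by (rule S_app[OF zS])
          have yu: "app y u \<in> Uar scale b'" by (rule S_app[OF yS])
          have xu: "app x u \<in> Uar scale a'" by (rule S_app[OF xS])
          have J1: "brk (Suc (a' + b')) c' (brk (Suc a') (Suc b') x y) (app z u) =
            brk (Suc a') (b' + c') x (brk (Suc b') c' y (app z u)) -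
            sgnv ((1 - int (Suc a')) * (1 - int (Suc b'))) (brk (Suc b') (a' + c') y (brk (Suc a') c' x (app z u)))"
            using less(1)[OF lt(1) xS yS zu] by simp
          have J2: "brk (a' + b') (Suc c') (brk (Suc a') b' x (app y u)) z =
            brk (Suc a') (b' + c') x (brk b' (Suc c') (app y u) z) -
            sgnv ((1 - int (Suc a')) * (1 - int b')) (brk b' (Suc (a' + c')) (app y u) (brk (Suc a') (Suc c') x z))"
            using less(1)[OF lt(2) xS yu zS] by simp
          have J3: "brk (a' + b') (Suc c') (brk a' (Suc b') (app x u) y) z =
            brk a' (Suc (b' + c')) (app x u) (brk (Suc b') (Suc c') y z) -
            sgnv ((1 - int a') * (1 - int (Suc b'))) (brk (Suc b') (a' + c') y (brk a' (Suc c') (app x u) z))"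
            using less(1)[OF lt(3) xu yS zS] by simp
          show "app (brk (Suc a') (Suc (b' + c')) x (brk (Suc b') (Suc c') y z) -
               sgnv ((1 - int (Suc a')) * (1 - int (Suc b'))) (brk (Suc b') (Suc (a' + c')) y (brk (Suc a') (Suc c') x z))) u =
            app (brk (Suc (a' + b')) (Suc c') (brk (Suc a') (Suc b') x y) z) u"
            unfolding app_diff app_simps app_brk brk_add2[OF xS] brk_add2[OF yS] brk_add1[OF zS]
              brk_sg2[OF xS] brk_sg2[OF yS] brk_sg1[OF zS] J1 J2 J3
            by (cases "even a'"; cases "even b'"; cases "even c'") (simp_all add: sgnv_def deg_def algebra_simps)
        qed (simp add: brk_Nil)
      qed
    qed
  qed
qed

lemma smul_vs: "vector_space (smul scale)"
  unfolding vector_space_def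
  by (simp add: fun_eq_iff scale_right_distrib scale_left_distrib)

lemma U_nat: "U scale (1 - int m) = Uar scale m" by (simp add: U_def)
lemma br_nat: "br (1 - int m) (1 - int n) = brk m n" by (simp add: br_def fun_eq_iff)
lemma sum_nat: "1 \<le> m + n \<Longrightarrow> 1 - int m + (1 - int n) = 1 - int (m + n - 1)" by simp
lemma obtain_nat: "(i::int) \<le> 1 \<Longrightarrow> \<exists>m. i = 1 - int m" by (rule exI[of _ "nat (1 - i)"]) simp

lemma U1_tail: "x \<in> Uar scale (Suc 0) \<Longrightarrow> x (w # v # vs) = 0"
proof -
  assume "x \<in> Uar scale (Suc 0)"
  then have "app x w \<in> range vec_elt" using S_app by fastforce
  then show ?thesis by (auto simp: vec_elt_def app_def fun_eq_iff)
qed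

lemma main:
  "semilocal_lie_superalgebra (smul scale) (U scale) br
    \<and> (\<forall>x\<in>U scale 0. \<forall>y\<in>U scale 0.
              br 0 0 x y = (\<lambda>xs. case xs of [u] \<Rightarrow> x [y [u]] - y [x [u]] | _ \<Rightarrow> 0))"
proof (intro conjI)
  show "\<forall>x\<in>U scale 0. \<forall>y\<in>U scale 0.
              br 0 0 x y = (\<lambda>xs. case xs of [u] \<Rightarrow> x [y [u]] - y [x [u]] | _ \<Rightarrow> 0)"
  proof (intro ballI)
    fix x y assume xy: "x \<in> U scale 0" "y \<in> U scale 0"
    then have xS: "x \<in> Uar scale (Suc 0)" and yS: "y \<in> Uar scale (Suc 0)" by (simp_all add: U_def)
    show "br 0 0 x y = (\<lambda>xs. case xs of [u] \<Rightarrow> x [y [u]] - y [x [u]] | _ \<Rightarrow> 0)"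
    proof
      fix xs show "br 0 0 x y xs = (case xs of [u] \<Rightarrow> x [y [u]] - y [x [u]] | _ \<Rightarrow> 0)"
      proof (cases xs)
        case Nil then show ?thesis by (simp add: br_def brk_Nil)
      next
        case (Cons u us)
        have "br 0 0 x y xs = app (brk (Suc 0) (Suc 0) x y) u us"
          by (simp add: br_def Cons app_def)
        also have "... = x (y [u] # us) - y (x [u] # us)"
          unfolding app_brk by (simp add: deg_def sgnv_def app_apply)
        finally show ?thesis using U1_tail[OF xS] U1_tail[OF yS] Cons
          by (cases us) auto
      qed
    qed
  qed
next
  show "semilocal_lie_superalgebra (smul scale) (U scale) br"
    unfolding semilocal_lie_superalgebra_def
  proof (intro conjI)
    show "vector_space (smul scale)" by (rule smul_vs)
  next
    show "\<forall>k\<le>1. 0 \<in> U scale k \<and> (\<forall>x\<in>U scale k. \<forall>y\<in>U scale k. x + y \<in> U scale k) \<and>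
      (\<forall>c. \<forall>x\<in>U scale k. smul scale c x \<in> U scale k)"
    proof (intro allI impI)
      fix k :: int assume "k \<le> 1"
      then obtain m where k: "k = 1 - int m" using obtain_nat by blast
      have 1: "0 \<in> U scale k" unfolding k U_nat by (rule S_zero)
      have 2: "\<forall>x\<in>U scale k. \<forall>y\<in>U scale k. x + y \<in> U scale k" unfolding k U_nat using S_add by blast
      have 3: "\<forall>c. \<forall>x\<in>U scale k. smul scale c x \<in> U scale k" unfolding k U_nat using S_smul by blast
      show "0 \<in> U scale k \<and> (\<forall>x\<in>U scale k. \<forall>y\<in>U scale k. x + y \<in> U scale k) \<and>
      (\<forall>c. \<forall>x\<in>U scale k. smul scale c x \<in> U scale k)" using 1 2 3 by blast
    qed
  next
    show "\<forall>i j. i \<le> 1 \<and> j \<le> 1 \<and> i + j \<le> 1 \<longrightarrow>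
        (\<forall>x\<in>U scale i. \<forall>y\<in>U scale j. br i j x y \<in> U scale (i + j)) \<and>
        (\<forall>x\<in>U scale i. \<forall>x'\<in>U scale i. \<forall>y\<in>U scale j. br i j (x + x') y = br i j x y + br i j x' y) \<and>
        (\<forall>x\<in>U scale i. \<forall>y\<in>U scale j. \<forall>y'\<in>U scale j. br i j x (y + y') = br i j x y + br i j x y') \<and>
        (\<forall>c. \<forall>x\<in>U scale i. \<forall>y\<in>U scale j. br i j (smul scale c x) y = smul scale c (br i j x y)) \<and>
        (\<forall>c. \<forall>x\<in>U scale i. \<forall>y\<in>U scale j. br i j x (smul scale c y) = smul scale c (br i j x y)) \<and>
        (\<forall>x\<in>U scale i. \<forall>y\<in>U scale j. br i j x y = - sgnv (i * j) (br j i y x))"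
    proof (intro allI impI)
      fix i j :: int assume ij: "i \<le> 1 \<and> j \<le> 1 \<and> i + j \<le> 1"
      obtain m where i: "i = 1 - int m" using obtain_nat ij by blast
      obtain n where j: "j = 1 - int n" using obtain_nat ij by blast
      have mn: "1 \<le> m + n" using ij i j by simp
      note e = i j sum_nat[OF mn] U_nat br_nat
      have 1: "\<forall>x\<in>U scale i. \<forall>y\<in>U scale j. br i j x y \<in> U scale (i + j)"
        unfolding e using brk_closed mn by blast
      have 2: "\<forall>x\<in>U scale i. \<forall>x'\<in>U scale i. \<forall>y\<in>U scale j. br i j (x + x') y = br i j x y + br i j x' y"
        unfolding e using brk_add1 by blast
      have 3: "\<forall>x\<in>U scale i. \<forall>y\<in>U scale j. \<forall>y'\<in>U scale j. br i j x (y + y') = br i j x y + br i j x y'"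
        unfolding e using brk_add2 by blast
      have 4: "\<forall>c. \<forall>x\<in>U scale i. \<forall>y\<in>U scale j. br i j (smul scale c x) y = smul scale c (br i j x y)"
        unfolding e using brk_smul1 by blast
      have 5: "\<forall>c. \<forall>x\<in>U scale i. \<forall>y\<in>U scale j. br i j x (smul scale c y) = smul scale c (br i j x y)"
        unfolding e using brk_smul2 by blast
      have 6: "\<forall>x\<in>U scale i. \<forall>y\<in>U scale j. br i j x y = - sgnv (i * j) (br j i y x)"
        unfolding e using antisym_nat by blast
      show "(\<forall>x\<in>U scale i. \<forall>y\<in>U scale j. br i j x y \<in> U scale (i + j)) \<and>
        (\<forall>x\<in>U scale i. \<forall>x'\<in>U scale i. \<forall>y\<in>U scale j. br i j (x + x') y = br i j x y + br i j x' y) \<and>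
        (\<forall>x\<in>U scale i. \<forall>y\<in>U scale j. \<forall>y'\<in>U scale j. br i j x (y + y') = br i j x y + br i j x y') \<and>
        (\<forall>c. \<forall>x\<in>U scale i. \<forall>y\<in>U scale j. br i j (smul scale c x) y = smul scale c (br i j x y)) \<and>
        (\<forall>c. \<forall>x\<in>U scale i. \<forall>y\<in>U scale j. br i j x (smul scale c y) = smul scale c (br i j x y)) \<and>
        (\<forall>x\<in>U scale i. \<forall>y\<in>U scale j. br i j x y = - sgnv (i * j) (br j i y x))"
        using 1 2 3 4 5 6 by blast
    qed
  next
    show "\<forall>i j k. i \<le> 1 \<and> j \<le> 1 \<and> k \<le> 1 \<and> i + j \<le> 1 \<and> j + k \<le> 1 \<and> i + k \<le> 1
              \<and> i + j + k \<le> 1 \<longrightarrow>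
        (\<forall>x\<in>U scale i. \<forall>y\<in>U scale j. \<forall>z\<in>U scale k.
           br i (j + k) x (br j k y z) - sgnv (i * j) (br j (i + k) y (br i k x z))
             = br (i + j) k (br i j x y) z)"
    proof (intro allI impI ballI)
      fix i j k :: int
      assume h: "i \<le> 1 \<and> j \<le> 1 \<and> k \<le> 1 \<and> i + j \<le> 1 \<and> j + k \<le> 1 \<and> i + k \<le> 1 \<and> i + j + k \<le> 1"
      obtain a where i: "i = 1 - int a" using obtain_nat h by blast
      obtain b where j: "j = 1 - int b" using obtain_nat h by blast
      obtain c where k: "k = 1 - int c" using obtain_nat h by blast
      have ab: "1 \<le> a + b" and bc: "1 \<le> b + c" and ac: "1 \<le> a + c" and abc: "2 \<le> a + b + c"
        using h i j k by simp_all
      fix x y z assume xyz: "x \<in> U scale i" "y \<in> U scale j" "z \<in> U scale k"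
      show "br i (j + k) x (br j k y z) - sgnv (i * j) (br j (i + k) y (br i k x z)) = br (i + j) k (br i j x y) z"
        using xyz unfolding i j k sum_nat[OF ab] sum_nat[OF bc] sum_nat[OF ac] U_nat br_nat
        using jacobi_nat[OF _ _ _ ab bc ac abc] by blast
    qed
  qed
qed

end

theorem proposition3p1:
  fixes scale :: "'k::field \<Rightarrow> 'v::ab_group_add \<Rightarrow> 'v"
  assumes "vector_space scale"
  shows "semilocal_lie_superalgebra (\<lambda>c f xs. scale c (f xs)) (U scale) br
         \<and> (\<forall>x\<in>U scale 0. \<forall>y\<in>U scale 0.
              br 0 0 x y = (\<lambda>xs. case xs of [u] \<Rightarrow> x [y [u]] - y [x [u]] | _ \<Rightarrow> 0))"
proof -
  have "(\<lambda>c f xs. scale c (f xs)) = smul scale" by (simp add: fun_eq_iff smul_def)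
  then show ?thesis using vector_space.main[OF assms] by simp
qed

end
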